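(* Let $L$ be a co-Heyting algebra and $X\subseteq L$ a subset which is compact for the codimetric topology. Then every monotonic (increasing or decreasing) sequence of elements of $X$ is convergent for the codimetric pseudometric.
   Context: A co-Heyting algebra is a bounded distributive lattice $(L,0,1,\vee,\wedge)$ such that $a-b=\min\{c\in L: a\le b\vee c\}$ exists for all $a,b$. Let $a\triangle b=(a-b)\vee(b-a)$. $\operatorname{Spec}L$ is the set of prime filters ordered by inclusion; height = foundation rank there; $\operatorname{codim}_La=\min\{\operatorname{height}\mathfrak p: a\in\mathfrak p\}$ ($+\infty$ if none). The codimetric pseudometric is $\operatorname{dist}_L(a,b)=2^{-\operatorname{codim}_L(a\triangle b)}$ if finite and $0$ otherwise; the codimetric topology is the topology it defines. *)

theory Defs
  imports "HOL-Analysis.Analysis"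
begin

definition coheyting :: "'a::{distrib_lattice,bounded_lattice} itself \<Rightarrow> bool" where
  "coheyting _ \<longleftrightarrow> (\<forall>a b::'a. \<exists>c. a \<le> sup b c \<and> (\<forall>d. a \<le> sup b d \<longrightarrow> c \<le> d))"

definition cdiff :: "'a::{distrib_lattice,bounded_lattice} \<Rightarrow> 'a \<Rightarrow> 'a" where
  "cdiff a b = (LEAST c. a \<le> sup b c)"

definition symdiff :: "'a::{distrib_lattice,bounded_lattice} \<Rightarrow> 'a \<Rightarrow> 'a" where
  "symdiff a b = sup (cdiff a b) (cdiff b a)"

definition prime_filter :: "'a::{distrib_lattice,bounded_lattice} set \<Rightarrow> bool" where
  "prime_filter F \<longleftrightarrow> top \<in> F \<and> bot \<notin> F
     \<and> (\<forall>a b. a \<in> F \<longrightarrow> a \<le> b \<longrightarrow> b \<in> F)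
     \<and> (\<forall>a b. a \<in> F \<longrightarrow> b \<in> F \<longrightarrow> inf a b \<in> F)
     \<and> (\<forall>a b. sup a b \<in> F \<longrightarrow> a \<in> F \<or> b \<in> F)"

text \<open>height_le p n: the foundation rank (height) of p in Spec L
  (prime filters ordered by inclusion) is at most the natural number n.
  Rank p = sup {rank q + 1 | q \<subset> p}, so rank p \<le> n iff every prime
  filter q \<subset> p has rank \<le> n - 1 (and none exists when n = 0).\<close>
fun height_le :: "'a::{distrib_lattice,bounded_lattice} set \<Rightarrow> nat \<Rightarrow> bool" where
  "height_le p 0 \<longleftrightarrow> (\<forall>q. prime_filter q \<longrightarrow> \<not> q \<subset> p)"
| "height_le p (Suc n) \<longleftrightarrow> (\<forall>q. prime_filter q \<longrightarrow> q \<subset> p \<longrightarrow> height_le q n)"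

definition codim_finite :: "'a::{distrib_lattice,bounded_lattice} \<Rightarrow> bool" where
  "codim_finite a \<longleftrightarrow> (\<exists>n p. prime_filter p \<and> a \<in> p \<and> height_le p n)"

definition codim :: "'a::{distrib_lattice,bounded_lattice} \<Rightarrow> nat" where
  "codim a = (LEAST n. \<exists>p. prime_filter p \<and> a \<in> p \<and> height_le p n)"

definition codist :: "'a::{distrib_lattice,bounded_lattice} \<Rightarrow> 'a \<Rightarrow> real" where
  "codist a b = (if codim_finite (symdiff a b) then 2 powr (- real (codim (symdiff a b))) else 0)"

definition codim_topology :: "'a::{distrib_lattice,bounded_lattice} topology" where
  "codim_topology = topology (\<lambda>U. \<forall>x\<in>U. \<exists>e>0. \<forall>y. codist x y < e \<longrightarrow> y \<in> U)"

definition codist_convergent :: "(nat \<Rightarrow> 'a::{distrib_lattice,bounded_lattice}) \<Rightarrow> bool" where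
  "codist_convergent s \<longleftrightarrow> (\<exists>l. \<forall>e>0. \<exists>N. \<forall>n\<ge>N. codist (s n) l < e)"

end

theory Submission
  imports Defs
begin

lemma cdiff_props:
  fixes a b :: "'a::{distrib_lattice,bounded_lattice}"
  assumes "coheyting TYPE('a)"
  shows "a \<le> sup b (cdiff a b) \<and> (\<forall>d. a \<le> sup b d \<longrightarrow> cdiff a b \<le> d)"
proof -
  obtain c where c: "a \<le> sup b c" "\<forall>d. a \<le> sup b d \<longrightarrow> c \<le> d"
    using assms unfolding coheyting_def by blast
  have "cdiff a b = c" unfolding cdiff_def
    by (rule Least_equality) (use c in auto)
  thus ?thesis using c by simp
qed

lemma cdiff_le:
  fixes a b :: "'a::{distrib_lattice,bounded_lattice}"
  assumes "coheyting TYPE('a)" "a \<le> sup b d"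
  shows "cdiff a b \<le> d"
  using cdiff_props[OF assms(1)] assms(2) by blast

lemma cdiff_ge:
  fixes a b :: "'a::{distrib_lattice,bounded_lattice}"
  assumes "coheyting TYPE('a)"
  shows "a \<le> sup b (cdiff a b)"
  using cdiff_props[OF assms(1)] by blast

lemma cdiff_bot:
  fixes a b :: "'a::{distrib_lattice,bounded_lattice}"
  assumes "coheyting TYPE('a)" "a \<le> b"
  shows "cdiff a b = bot"
proof -
  have "cdiff a b \<le> bot" by (rule cdiff_le[OF assms(1)]) (use assms(2) in simp)
  thus ?thesis by (simp add: bot_unique)
qed

lemma cdiff_mono1:
  fixes a b :: "'a::{distrib_lattice,bounded_lattice}"
  assumes "coheyting TYPE('a)" "a \<le> a'"
  shows "cdiff a b \<le> cdiff a' b"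
  by (rule cdiff_le[OF assms(1)]) (use assms(2) cdiff_ge[OF assms(1), of a' b] in auto)

lemma cdiff_tri:
  fixes a b c :: "'a::{distrib_lattice,bounded_lattice}"
  assumes "coheyting TYPE('a)"
  shows "cdiff a c \<le> sup (cdiff a b) (cdiff b c)"
proof (rule cdiff_le[OF assms])
  have "a \<le> sup b (cdiff a b)" by (rule cdiff_ge[OF assms])
  also have "sup b (cdiff a b) \<le> sup (sup c (cdiff b c)) (cdiff a b)"
    by (rule sup_mono) (simp_all add: cdiff_ge[OF assms])
  also have "\<dots> = sup c (sup (cdiff a b) (cdiff b c))"
    by (simp add: sup.assoc sup.commute sup.left_commute)
  finally show "a \<le> sup c (sup (cdiff a b) (cdiff b c))" .
qed

lemma symdiff_tri:
  fixes a b c :: "'a::{distrib_lattice,bounded_lattice}"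
  assumes "coheyting TYPE('a)"
  shows "symdiff a c \<le> sup (symdiff a b) (symdiff b c)"
proof -
  have 1: "cdiff a c \<le> sup (cdiff a b) (cdiff b c)" by (rule cdiff_tri[OF assms])
  have 2: "cdiff c a \<le> sup (cdiff c b) (cdiff b a)" by (rule cdiff_tri[OF assms])
  have 3: "sup (cdiff a b) (cdiff b c) \<le> sup (symdiff a b) (symdiff b c)"
    unfolding symdiff_def by (intro sup_mono) simp_all
  have 4: "sup (cdiff c b) (cdiff b a) \<le> sup (symdiff a b) (symdiff b c)"
    unfolding symdiff_def by (intro le_supI) (simp_all add: le_supI1 le_supI2)
  show ?thesis unfolding symdiff_def[of a c]
    using order_trans[OF 1 3] order_trans[OF 2 4] by (rule le_supI)
qed

definition cd :: "'a::{distrib_lattice,bounded_lattice} \<Rightarrow> real" where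
  "cd a = (if codim_finite a then 2 powr (- real (codim a)) else 0)"

lemma codist_cd: "codist a b = cd (symdiff a b)"
  unfolding codist_def cd_def by simp

lemma cd_nonneg: "cd a \<ge> 0"
  unfolding cd_def by auto

lemma codim_wit:
  assumes "codim_finite a"
  shows "\<exists>p. prime_filter p \<and> a \<in> p \<and> height_le p (codim a)"
  using LeastI_ex[of "\<lambda>n. \<exists>p. prime_filter p \<and> a \<in> p \<and> height_le p n"] assms
  unfolding codim_finite_def codim_def by blast

lemma cd_mono:
  assumes "a \<le> b"
  shows "cd a \<le> cd b"
proof (cases "codim_finite a")
  case True
  then obtain p where p: "prime_filter p" "a \<in> p" "height_le p (codim a)"
    using codim_wit by blast
  have bp: "b \<in> p" using p assms unfolding prime_filter_def by blast
  hence fb: "codim_finite b" using p unfolding codim_finite_def by blast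
  have "codim b \<le> codim a" unfolding codim_def[of b]
    by (rule Least_le) (use p bp in blast)
  hence "2 powr (- real (codim a)) \<le> 2 powr (- real (codim b))"
    by (intro powr_mono) auto
  thus ?thesis using True fb unfolding cd_def by simp
next
  case False
  thus ?thesis using cd_nonneg[of b] unfolding cd_def by simp
qed

lemma cd_sup: "cd (sup a b) \<le> max (cd a) (cd b)"
proof (cases "codim_finite (sup a b)")
  case True
  then obtain p where p: "prime_filter p" "sup a b \<in> p" "height_le p (codim (sup a b))"
    using codim_wit by blast
  hence "a \<in> p \<or> b \<in> p" unfolding prime_filter_def by blast
  then show ?thesis
  proof
    assume ap: "a \<in> p"
    hence fa: "codim_finite a" using p unfolding codim_finite_def by blast
    have "codim a \<le> codim (sup a b)" unfolding codim_def[of a]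
      by (rule Least_le) (use p ap in blast)
    hence "2 powr (- real (codim (sup a b))) \<le> 2 powr (- real (codim a))"
      by (intro powr_mono) auto
    hence "cd (sup a b) \<le> cd a" using True fa unfolding cd_def by simp
    thus ?thesis by simp
  next
    assume ap: "b \<in> p"
    hence fa: "codim_finite b" using p unfolding codim_finite_def by blast
    have "codim b \<le> codim (sup a b)" unfolding codim_def[of b]
      by (rule Least_le) (use p ap in blast)
    hence "2 powr (- real (codim (sup a b))) \<le> 2 powr (- real (codim b))"
      by (intro powr_mono) auto
    hence "cd (sup a b) \<le> cd b" using True fa unfolding cd_def by simp
    thus ?thesis by simp
  qed
next
  case False
  thus ?thesis using cd_nonneg[of a] unfolding cd_def by simp
qed

lemma codist_sym: "codist a b = codist b a"
  unfolding codist_def symdiff_def by (simp add: sup_commute)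

lemma codist_tri:
  fixes a b c :: "'a::{distrib_lattice,bounded_lattice}"
  assumes "coheyting TYPE('a)"
  shows "codist a c \<le> max (codist a b) (codist b c)"
  unfolding codist_cd
  using cd_mono[OF symdiff_tri[OF assms, where a=a and b=b and c=c]] cd_sup[of "symdiff a b" "symdiff b c"]
  by linarith

lemma istop: "istopology (\<lambda>U. \<forall>x\<in>U. \<exists>e>0. \<forall>y. codist x y < e \<longrightarrow> y \<in> U)"
  unfolding istopology_def
proof (intro conjI allI impI)
  fix S T :: "'a set"
  assume S: "\<forall>x\<in>S. \<exists>e>0. \<forall>y. codist x y < e \<longrightarrow> y \<in> S"
    and T: "\<forall>x\<in>T. \<exists>e>0. \<forall>y. codist x y < e \<longrightarrow> y \<in> T"
  show "\<forall>x\<in>S \<inter> T. \<exists>e>0. \<forall>y. codist x y < e \<longrightarrow> y \<in> S \<inter> T"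
  proof
    fix x assume x: "x \<in> S \<inter> T"
    then obtain e1 where e1: "e1 > 0" "\<forall>y. codist x y < e1 \<longrightarrow> y \<in> S"
      using S by blast
    obtain e2 where e2: "e2 > 0" "\<forall>y. codist x y < e2 \<longrightarrow> y \<in> T"
      using T x by blast
    show "\<exists>e>0. \<forall>y. codist x y < e \<longrightarrow> y \<in> S \<inter> T"
    proof (intro exI[of _ "min e1 e2"] conjI allI impI)
      show "min e1 e2 > 0" using e1 e2 by simp
      fix y assume "codist x y < min e1 e2"
      thus "y \<in> S \<inter> T" using e1(2) e2(2) by simp
    qed
  qed
next
  fix K :: "'a set set"
  assume K: "\<forall>S\<in>K. \<forall>x\<in>S. \<exists>e>0. \<forall>y. codist x y < e \<longrightarrow> y \<in> S"
  show "\<forall>x\<in>\<Union>K. \<exists>e>0. \<forall>y. codist x y < e \<longrightarrow> y \<in> \<Union>K"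
  proof
    fix x assume "x \<in> \<Union>K"
    then obtain S where S: "S \<in> K" "x \<in> S" by blast
    then obtain e where e: "e > 0" "\<forall>y. codist x y < e \<longrightarrow> y \<in> S" using K by blast
    show "\<exists>e>0. \<forall>y. codist x y < e \<longrightarrow> y \<in> \<Union>K"
      using e S(1) by blast
  qed
qed

lemma openin_codim: "openin codim_topology U \<longleftrightarrow> (\<forall>x\<in>U. \<exists>e>0. \<forall>y. codist x y < e \<longrightarrow> y \<in> U)"
  by (simp only: codim_topology_def topology_inverse'[OF istop])

lemma ball_open:
  fixes l :: "'a::{distrib_lattice,bounded_lattice}"
  assumes "coheyting TYPE('a)"
  shows "openin codim_topology {y. codist l y < e}"
  unfolding openin_codim
proof (intro ballI)
  fix x assume "x \<in> {y. codist l y < e}"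
  hence x: "codist l x < e" by simp
  show "\<exists>e'>0. \<forall>y. codist x y < e' \<longrightarrow> y \<in> {y. codist l y < e}"
  proof (intro exI[of _ "e - codist l x"] conjI allI impI)
    show "e - codist l x > 0" using x by simp
    fix y assume "codist x y < e - codist l x"
    moreover have "codist l x \<ge> 0" using cd_nonneg codist_cd by metis
    ultimately have "codist x y < e" by linarith
    thus "y \<in> {y. codist l y < e}" using codist_tri[OF assms, where a=l and b=x and c=y] x by simp
  qed
qed

lemma cdiff_anti2:
  fixes a b :: "'a::{distrib_lattice,bounded_lattice}"
  assumes "coheyting TYPE('a)" "b \<le> b'"
  shows "cdiff a b' \<le> cdiff a b"
proof (rule cdiff_le[OF assms(1)])
  have "a \<le> sup b (cdiff a b)" by (rule cdiff_ge[OF assms(1)])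
  also have "\<dots> \<le> sup b' (cdiff a b)" using assms(2) by (rule sup_mono) simp
  finally show "a \<le> sup b' (cdiff a b)" .
qed

lemma codist_mono_up:
  fixes x y x' :: "'a::{distrib_lattice,bounded_lattice}"
  assumes "coheyting TYPE('a)" "y \<le> x" "x \<le> x'"
  shows "codist x y \<le> codist x' y"
proof -
  have "symdiff x y \<le> symdiff x' y"
    unfolding symdiff_def using cdiff_bot[OF assms(1) assms(2)]
      cdiff_mono1[OF assms(1) assms(3), of y]
    by (simp add: le_supI1)
  thus ?thesis unfolding codist_cd by (rule cd_mono)
qed

lemma codist_mono_down:
  fixes x y x' :: "'a::{distrib_lattice,bounded_lattice}"
  assumes "coheyting TYPE('a)" "x \<le> y" "x' \<le> x"
  shows "codist x y \<le> codist x' y"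
proof -
  have "symdiff x y \<le> symdiff x' y"
    unfolding symdiff_def using cdiff_bot[OF assms(1) assms(2)]
      cdiff_anti2[OF assms(1) assms(3), of y]
    by (simp add: le_supI2)
  thus ?thesis unfolding codist_cd by (rule cd_mono)
qed

lemma codist_refl: "codist a a = 0"
proof -
  have c: "cdiff a a = bot" unfolding cdiff_def
    by (rule Least_equality) simp_all
  have "\<not> codim_finite (symdiff a a)"
    unfolding codim_finite_def symdiff_def c prime_filter_def by simp
  thus ?thesis unfolding codist_def by simp
qed

theorem corollary7p7:
  fixes X :: "'a::{distrib_lattice,bounded_lattice} set"
    and s :: "nat \<Rightarrow> 'a"
  assumes "coheyting TYPE('a)"
    and "compactin codim_topology X"
    and "\<forall>n. s n \<in> X"
    and "mono s \<or> antimono s"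
  shows "codist_convergent s"
proof -
  have coh: "coheyting TYPE('a)" by fact
  have "\<exists>l. \<forall>e>0. \<forall>N. \<exists>n\<ge>N. codist (s n) l < e"
  proof (rule ccontr)
    assume "\<not> ?thesis"
    hence ex: "\<forall>l. \<exists>e. e > 0 \<and> (\<exists>N. \<forall>n\<ge>N. codist (s n) l \<ge> e)"
      by (simp add: not_less)
    from choice[OF ex] obtain E where E: "\<forall>l. E l > 0 \<and> (\<exists>N. \<forall>n\<ge>N. codist (s n) l \<ge> E l)"
      by (elim exE)
    hence "\<forall>l. \<exists>N. \<forall>n\<ge>N. codist (s n) l \<ge> E l" by blast
    from choice[OF this] obtain Nf where Nf: "\<forall>l. \<forall>n\<ge>Nf l. codist (s n) l \<ge> E l"
      by (elim exE)
    have EN1: "\<And>l. E l > 0" using E by simp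
    have EN2: "\<And>l n. n \<ge> Nf l \<Longrightarrow> codist (s n) l \<ge> E l" using Nf by simp
    define B where "B l = {y. codist l y < E l}" for l
    have "\<forall>U\<in>B ` X. openin codim_topology U"
    proof
      fix U assume "U \<in> B ` X"
      then obtain l where "U = B l" by blast
      thus "openin codim_topology U" by (simp add: B_def ball_open[OF coh])
    qed
    moreover have "X \<subseteq> \<Union> (B ` X)"
    proof
      fix x assume x: "x \<in> X"
      have "x \<in> B x" by (simp add: B_def codist_refl EN1)
      thus "x \<in> \<Union> (B ` X)" using x by blast
    qed
    ultimately have cov: "(\<forall>U\<in>B ` X. openin codim_topology U) \<and> X \<subseteq> \<Union> (B ` X)" by (rule conjI)
    have "\<forall>U. (\<forall>V\<in>U. openin codim_topology V) \<and> X \<subseteq> \<Union>U \<longrightarrow>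
           (\<exists>F. finite F \<and> F \<subseteq> U \<and> X \<subseteq> \<Union>F)"
      using assms(2) unfolding compactin_def by (rule conjunct2)
    hence "(\<forall>V\<in>B ` X. openin codim_topology V) \<and> X \<subseteq> \<Union>(B ` X) \<longrightarrow>
           (\<exists>F. finite F \<and> F \<subseteq> B ` X \<and> X \<subseteq> \<Union>F)"
      by (rule spec)
    hence "\<exists>F. finite F \<and> F \<subseteq> B ` X \<and> X \<subseteq> \<Union>F"
      using cov by (rule mp)
    then obtain F where F: "finite F" "F \<subseteq> B ` X" "X \<subseteq> \<Union>F"
      by (elim exE conjE)
    then obtain G where G: "G \<subseteq> X" "finite G" "F = B ` G"
      using finite_subset_image[of F B X] by blast
    define M where "M = (\<Sum>l\<in>G. Nf l)"
    have "s M \<in> X" using assms(3) by blast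
    hence "s M \<in> \<Union> (B ` G)" using F(3) unfolding G(3) by (rule subsetD[rotated])
    then obtain l where l0: "l \<in> G" "s M \<in> B l" by (rule UN_E)
    hence l: "l \<in> G" "codist l (s M) < E l" unfolding B_def by simp_all
    have "Nf l \<le> M" unfolding M_def by (rule member_le_sum[OF l(1) _ G(2)]) simp
    hence "codist (s M) l \<ge> E l" by (rule EN2)
    moreover have "codist l (s M) = codist (s M) l" by (rule codist_sym)
    ultimately show False using l(2) by linarith
  qed
  then obtain l where l: "\<And>e N. e > 0 \<Longrightarrow> \<exists>n\<ge>N. codist (s n) l < e" by blast
  show ?thesis unfolding codist_convergent_def
  proof (intro exI[of _ l] allI impI)
    fix e :: real assume e: "e > 0"
    obtain N where N: "codist (s N) l < e" using l[OF e, of 0] by blast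
    show "\<exists>N. \<forall>n\<ge>N. codist (s n) l < e"
    proof (intro exI[of _ N] allI impI)
      fix n assume n: "N \<le> n"
      obtain n' where n': "n' \<ge> n" "codist (s n') l < e" using l[OF e, of n] by blast
      have key: "codist (s n) (s N) \<le> codist (s n') (s N)"
        using assms(4)
      proof
        assume m: "mono s"
        show ?thesis
          by (rule codist_mono_up[OF coh]) (use m n n' in \<open>auto simp: mono_def\<close>)
      next
        assume m: "antimono s"
        show ?thesis
          by (rule codist_mono_down[OF coh]) (use m n n' in \<open>auto simp: antimono_def\<close>)
      qed
      have t1: "codist (s n') (s N) \<le> max (codist (s n') l) (codist l (s N))"
        by (rule codist_tri[OF coh])
      have t2: "codist (s n) l \<le> max (codist (s n) (s N)) (codist (s N) l)"
        by (rule codist_tri[OF coh])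
      show "codist (s n) l < e"
        using key t1 t2 N n'(2) codist_sym[of l "s N"] by linarith
    qed
  qed
qed

end
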